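(* In the network model described in the context, let $\pi$ be an admissible cyclic policy with maximum inter-scheduling times $k^{\pi}_e$, and suppose the slice widths satisfy $w_{i,e}\ge\lambda_i k^{\pi}_e$ for all $e\in\mathcal{T}^{(i)}$. Then \[ |\mathcal{T}^{(i)}|\le\tau_i^*(\pi,\lambda_i)\le\sum_{e\in\mathcal{T}^{(i)}}k_e^{\pi}. \]
   Context: Network model: directed graph $G=(V,E)$, slotted time, link capacities $c_e$, interference given by a conflict graph on links with feasible activation sets $\mathcal{M}$. Flow $f_i$ has fixed route $\mathcal{T}^{(i)}$ (of $|\mathcal{T}^{(i)}|$ links) and deterministic fluid arrival rate $\lambda_i>0$ per slot at its source. Link $e\in\mathcal{T}^{(i)}$ reserves a slice $w_{i,e}$ for $f_i$ with its own FCFS queue (initially empty). An admissible policy activates $\mu^\pi(t)\in\mathcal{M}$ in each slot and is work-conserving (an activated link serves $\min\{Q_{i,e}(t),w_{i,e}\}$ from each slice queue; served units proceed to the next link of the route, one link per slot at most). A cyclic policy satisfies $\mu^\pi(t)=\mu^\pi(t+K^\pi)$ for all $t\ge 0$. The maximum inter-scheduling time $k_e^\pi$ of link $e$ is the largest number of slots between two consecutive activations of $e$ (cyclically over the period). $\tau_i^*(\pi,\lambda_i)$ is the maximum delay (from arrival at the source to delivery at the destination) experienced by any packet of $f_i$ under $\pi$, equivalently the minimum deadline that $\pi$ guarantees for $f_i$. *)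

theory Defs
  imports Complex_Main "HOL-Library.Extended_Nat"
begin

text \<open>The route is the list of links of the flow (hop 0 is the first link at the source).
  Per-slice queues of flow i are isolated from other flows, so only the
  flow under consideration needs to be modelled.\<close>

definition is_route :: "('v \<times> 'v) set \<Rightarrow> ('v \<times> 'v) list \<Rightarrow> bool" where
  "is_route E r \<longleftrightarrow> r \<noteq> [] \<and> distinct r \<and> set r \<subseteq> E \<and>
     (\<forall>j. Suc j < length r \<longrightarrow> snd (r ! j) = fst (r ! Suc j))"

definition admissible :: "('v \<times> 'v) set set \<Rightarrow> (nat \<Rightarrow> ('v \<times> 'v) set) \<Rightarrow> bool" where
  "admissible M mu \<longleftrightarrow> (\<forall>t. mu t \<in> M)"

definition cyclic :: "(nat \<Rightarrow> 'e set) \<Rightarrow> nat \<Rightarrow> bool" where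
  "cyclic mu K \<longleftrightarrow> K > 0 \<and> (\<forall>t. mu (t + K) = mu t)"

definition inter_sched :: "(nat \<Rightarrow> 'e set) \<Rightarrow> 'e \<Rightarrow> nat" where
  "inter_sched mu e = Max {d. \<exists>t. e \<in> mu t \<and> d = (LEAST s. 0 < s \<and> e \<in> mu (t + s))}"

text \<open>Work-conserving fluid dynamics. queues r w mu lam t j is the backlog of the
  slice queue of the flow at hop j (link r!j) at the beginning of slot t.
  Fluid arriving at the source during slot t (amount lam) can be served from
  slot t+1 on; fluid served by hop j in slot t enters hop j+1 and can be served
  there from slot t+1 on.\<close>
definition serv :: "('e list) \<Rightarrow> ('e \<Rightarrow> real) \<Rightarrow> (nat \<Rightarrow> 'e set) \<Rightarrow> nat \<Rightarrow> (nat \<Rightarrow> real) \<Rightarrow> nat \<Rightarrow> real" where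
  "serv r w mu t Q j = (if r ! j \<in> mu t then min (Q j) (w (r ! j)) else 0)"

primrec queues :: "'e list \<Rightarrow> ('e \<Rightarrow> real) \<Rightarrow> (nat \<Rightarrow> 'e set) \<Rightarrow> real \<Rightarrow> nat \<Rightarrow> nat \<Rightarrow> real" where
  "queues r w mu lam 0 = (\<lambda>j. 0)"
| "queues r w mu lam (Suc t) =
     (\<lambda>j. queues r w mu lam t j - serv r w mu t (queues r w mu lam t) j
          + (if j = 0 then lam else serv r w mu t (queues r w mu lam t) (j - 1)))"

definition delivered :: "'e list \<Rightarrow> ('e \<Rightarrow> real) \<Rightarrow> (nat \<Rightarrow> 'e set) \<Rightarrow> real \<Rightarrow> nat \<Rightarrow> real" where
  "delivered r w mu lam t =
     (\<Sum>u<t. serv r w mu u (queues r w mu lam u) (length r - 1))"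

text \<open>A fluid particle is identified by its position x > 0 in the arrival stream
  (FCFS everywhere).\<close>
definition arrival_slot :: "real \<Rightarrow> real \<Rightarrow> nat" where
  "arrival_slot lam x = nat (\<lceil>x / lam\<rceil> - 1)"

definition particle_delay :: "'e list \<Rightarrow> ('e \<Rightarrow> real) \<Rightarrow> (nat \<Rightarrow> 'e set) \<Rightarrow> real \<Rightarrow> real \<Rightarrow> enat" where
  "particle_delay r w mu lam x =
     (if \<exists>d. x \<le> delivered r w mu lam (Suc d)
      then enat ((LEAST d. x \<le> delivered r w mu lam (Suc d)) - arrival_slot lam x)
      else \<infinity>)"

definition max_delay :: "'e list \<Rightarrow> ('e \<Rightarrow> real) \<Rightarrow> (nat \<Rightarrow> 'e set) \<Rightarrow> real \<Rightarrow> enat" where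
  "max_delay r w mu lam = (SUP x\<in>{0<..}. particle_delay r w mu lam x)"

end

theory Submission
  imports Defs
begin

definition DD :: "'e list \<Rightarrow> ('e \<Rightarrow> real) \<Rightarrow> (nat \<Rightarrow> 'e set) \<Rightarrow> real \<Rightarrow> nat \<Rightarrow> nat \<Rightarrow> real" where
  "DD r w mu lam j t = (\<Sum>u<t. serv r w mu u (queues r w mu lam u) j)"

lemma Q_eq: "queues r w mu lam t j = (if j = 0 then lam * real t else DD r w mu lam (j-1) t) - DD r w mu lam j t"
  by (induction t arbitrary: j) (auto simp: DD_def algebra_simps)

lemma Q_nonneg:
  assumes "\<forall>j<length r. w (r!j) \<ge> 0" "lam \<ge> 0"
  shows "\<forall>j<length r. queues r w mu lam t j \<ge> 0"
proof (induction t)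
  case 0 then show ?case by simp
next
  case (Suc t)
  show ?case
  proof (intro allI impI)
    fix j assume j: "j < length r"
    have a: "queues r w mu lam t j - serv r w mu t (queues r w mu lam t) j \<ge> 0"
      using Suc j by (simp add: serv_def)
    have b: "(if j = 0 then lam else serv r w mu t (queues r w mu lam t) (j - 1)) \<ge> 0"
      using Suc assms j by (auto simp: serv_def)
    show "queues r w mu lam (Suc t) j \<ge> 0" using a b by simp
  qed
qed

lemma serv_nonneg:
  assumes "\<forall>j<length r. w (r!j) \<ge> 0" "lam \<ge> 0" "j < length r"
  shows "serv r w mu t (queues r w mu lam t) j \<ge> 0"
  using Q_nonneg[OF assms(1,2), of mu t] assms by (auto simp: serv_def)

lemma DD_mono:
  assumes "\<forall>j<length r. w (r!j) \<ge> 0" "lam \<ge> 0" "j < length r" "t1 \<le> t2"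
  shows "DD r w mu lam j t1 \<le> DD r w mu lam j t2"
  unfolding DD_def
  by (rule sum_mono2) (use assms serv_nonneg in auto)

lemma DD_nonneg:
  assumes "\<forall>j<length r. w (r!j) \<ge> 0" "lam \<ge> 0" "j < length r"
  shows "DD r w mu lam j t \<ge> 0"
  unfolding DD_def by (rule sum_nonneg) (use assms serv_nonneg in auto)

lemma shift_cyc: "cyclic mu K \<Longrightarrow> mu (s + K * m) = mu s"
proof (induction m)
  case (Suc m)
  have "mu (s + K * Suc m) = mu ((s + K * m) + K)" by (simp add: algebra_simps)
  also have "\<dots> = mu (s + K * m)" using Suc.prems by (simp add: cyclic_def)
  finally show ?case using Suc by simp
qed simp

lemma next_act:
  assumes "cyclic mu K" "e \<in> mu u"
  shows "\<exists>s. 0 < s \<and> s \<le> inter_sched mu e \<and> e \<in> mu (u + s)"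
proof -
  let ?L = "\<lambda>t. LEAST s. 0 < s \<and> e \<in> mu (t + s)"
  have K: "0 < K \<and> e \<in> mu (u + K)" using assms by (auto simp: cyclic_def)
  have L: "0 < ?L u \<and> e \<in> mu (u + ?L u)" by (rule LeastI[of _ K]) (use K in auto)
  have fin: "finite {d. \<exists>t. e \<in> mu t \<and> d = ?L t}"
  proof (rule finite_subset[of _ "{..K}"])
    show "{d. \<exists>t. e \<in> mu t \<and> d = ?L t} \<subseteq> {..K}"
    proof
      fix d assume "d \<in> {d. \<exists>t. e \<in> mu t \<and> d = ?L t}"
      then obtain t where t: "e \<in> mu t" "d = ?L t" by auto
      have "0 < K \<and> e \<in> mu (t + K)" using assms t by (auto simp: cyclic_def)
      then have "?L t \<le> K" by (rule Least_le)
      then show "d \<in> {..K}" using t by auto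
    qed
  qed auto
  have "?L u \<le> inter_sched mu e" unfolding inter_sched_def
    by (rule Max_ge[OF fin]) (use assms in auto)
  then show ?thesis using L by blast
qed

lemma window:
  assumes "cyclic mu K" "e \<in> mu u0"
  shows "\<exists>v. t \<le> v \<and> v < t + inter_sched mu e \<and> e \<in> mu v"
proof -
  let ?k = "inter_sched mu e"
  have W': "\<exists>v. t' \<le> v \<and> v < t' + ?k \<and> e \<in> mu v" if "u0 < t'" for t'
  proof -
    let ?P = "{s. s < t' \<and> e \<in> mu s}"
    have fin: "finite ?P" by auto
    have ne: "?P \<noteq> {}" using that assms by auto
    let ?u = "Max ?P"
    have u: "?u < t'" "e \<in> mu ?u" using Max_in[OF fin ne] by auto
    obtain s where s: "0 < s" "s \<le> ?k" "e \<in> mu (?u + s)" using next_act[OF assms(1) u(2)] by blast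
    have "\<not> (?u + s < t')"
    proof
      assume "?u + s < t'"
      then have "?u + s \<in> ?P" using s by auto
      then have "?u + s \<le> ?u" using Max_ge[OF fin] by blast
      then show False using s by auto
    qed
    then show ?thesis using s u by (intro exI[of _ "?u + s"]) auto
  qed
  have K: "K > 0" using assms by (auto simp: cyclic_def)
  have "u0 + 1 \<le> K * (u0 + 1)" using K by (metis One_nat_def Suc_leI mult_le_mono1 nat_mult_1)
  then have "u0 < t + K * (u0 + 1)" by linarith
  then obtain v where v: "t + K * (u0 + 1) \<le> v" "v < t + K * (u0 + 1) + ?k" "e \<in> mu v"
    using W' by blast
  define v' where "v' = v - K * (u0 + 1)"
  have "v = v' + K * (u0 + 1)" using v(1) v'_def by auto
  then have "e \<in> mu v'" using v(3) shift_cyc[OF assms(1)] by metis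
  then show ?thesis using v v'_def by (intro exI[of _ v']) auto
qed

lemma hop_bound:
  fixes A Dj :: "nat \<Rightarrow> real" and act :: "nat \<Rightarrow> bool"
  assumes step: "\<And>t. Dj (Suc t) = Dj t + (if act t then min (A t - Dj t) W else 0)"
    and nonneg: "\<And>t. Dj t \<ge> 0"
    and mono: "\<And>t1 t2. t1 \<le> t2 \<Longrightarrow> Dj t1 \<le> Dj t2"
    and Wk: "W \<ge> lam * real k" and lam: "lam > 0" and S': "S' \<ge> 0"
    and win: "\<And>t. \<exists>v. t \<le> v \<and> v < t + k \<and> act v"
    and Ab: "\<And>t. A t \<ge> lam * (real t - S')"
  shows "Dj t \<ge> lam * (real t - real k - S')"
proof -
  have actb: "act u \<Longrightarrow> Dj (Suc u) \<ge> lam * (real u - S')" for u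
  proof (induction u rule: less_induct)
    case (less u)
    show ?case
    proof (cases "A u - Dj u \<le> W")
      case True
      then have "Dj (Suc u) = A u" using step[of u] less.prems by simp
      then show ?thesis using Ab[of u] by simp
    next
      case False
      then have eq: "Dj (Suc u) = Dj u + W" using step[of u] less.prems by simp
      show ?thesis
      proof (cases "k \<le> u")
        case True
        obtain v where v: "u - k \<le> v" "v < u - k + k" "act v" using win by blast
        have vu: "v < u" using v True by simp
        have "lam * (real v - S') \<le> Dj (Suc v)" using less.IH[OF vu v(3)] .
        also have "\<dots> \<le> Dj u" using mono vu by simp
        finally have "lam * (real v - S') \<le> Dj u" .
        moreover have "lam * (real u - real k - S') \<le> lam * (real v - S')"
          using v(1) True lam by (intro mult_left_mono) auto
        ultimately have "lam * (real u - real k - S') \<le> Dj u" by linarith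
        then show ?thesis using eq Wk by (simp add: algebra_simps)
      next
        case False
        have "lam * (real u - S') \<le> lam * real k"
          using False lam S' by (intro mult_left_mono) auto
        then show ?thesis using eq Wk nonneg[of u] by linarith
      qed
    qed
  qed
  show ?thesis
  proof (cases "k \<le> t")
    case True
    obtain v where v: "t - k \<le> v" "v < t - k + k" "act v" using win by blast
    have vu: "Suc v \<le> t" using v True by simp
    have "lam * (real v - S') \<le> Dj (Suc v)" using actb[OF v(3)] .
    also have "\<dots> \<le> Dj t" using mono vu by simp
    finally have "lam * (real v - S') \<le> Dj t" .
    moreover have "lam * (real t - real k - S') \<le> lam * (real v - S')"
      using v(1) True lam by (intro mult_left_mono) auto
    ultimately show ?thesis by linarith
  next
    case False
    have "lam * (real t - real k - S') \<le> 0"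
      using False lam S' by (intro mult_nonneg_nonpos) auto
    then show ?thesis using nonneg[of t] by linarith
  qed
qed

lemma DD_step: "DD r w mu lam j (Suc t) = DD r w mu lam j t +
   (if r ! j \<in> mu t then min ((if j = 0 then lam * real t else DD r w mu lam (j-1) t) - DD r w mu lam j t) (w (r!j)) else 0)"
proof -
  have "DD r w mu lam j (Suc t) = DD r w mu lam j t + serv r w mu t (queues r w mu lam t) j"
    by (simp add: DD_def)
  also have "serv r w mu t (queues r w mu lam t) j = (if r ! j \<in> mu t then min ((if j = 0 then lam * real t else DD r w mu lam (j-1) t) - DD r w mu lam j t) (w (r!j)) else 0)"
    unfolding serv_def by (subst Q_eq) simp
  finally show ?thesis .
qed

lemma all_hops:
  assumes cyc: "cyclic mu K" and act: "\<forall>e\<in>set r. \<exists>t. e \<in> mu t" and lam: "lam > 0"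
    and wk: "\<forall>e\<in>set r. w e \<ge> lam * real (inter_sched mu e)"
  shows "j < length r \<Longrightarrow> DD r w mu lam j t \<ge> lam * (real t - (\<Sum>i<Suc j. real (inter_sched mu (r!i))))"
proof (induction j arbitrary: t)
  have w0: "\<forall>j<length r. w (r!j) \<ge> 0" using wk lam
    by (meson mult_nonneg_nonneg less_imp_le nth_mem of_nat_0_le_iff order_trans)
  {
    case 0
    obtain u0 where u0: "r!0 \<in> mu u0" using act 0 by (meson nth_mem)
    have "DD r w mu lam 0 t \<ge> lam * (real t - real (inter_sched mu (r!0)) - 0)"
      apply (rule hop_bound[where act = "\<lambda>t. r!0 \<in> mu t" and A = "\<lambda>t. lam * real t" and W = "w (r!0)"])
      using DD_step[of r w mu lam 0] apply simp
      using DD_nonneg[OF w0 _ 0] lam apply simp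
      using DD_mono[OF w0 _ 0] lam apply simp
      using wk 0 apply simp
      using lam apply simp
      apply simp
      using window[OF cyc u0] apply simp
      by simp
    then show ?case by simp
  next
    case (Suc j)
    then have j: "j < length r" by simp
    obtain u0 where u0: "r!Suc j \<in> mu u0" using act Suc by (meson nth_mem)
    have "DD r w mu lam (Suc j) t \<ge> lam * (real t - real (inter_sched mu (r!Suc j)) - (\<Sum>i<Suc j. real (inter_sched mu (r!i))))"
      apply (rule hop_bound[where act = "\<lambda>t. r!Suc j \<in> mu t" and A = "DD r w mu lam j" and W = "w (r!Suc j)"])
      using DD_step[of r w mu lam "Suc j"] apply simp
      using DD_nonneg[OF w0 _ Suc.prems] lam apply simp
      using DD_mono[OF w0 _ Suc.prems] lam apply simp
      using wk Suc.prems apply simp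
      using lam apply simp
      apply (simp add: sum_nonneg)
      using window[OF cyc u0] apply simp
      using Suc.IH[OF j] by simp
    then show ?case by (simp add: algebra_simps)
  }
qed

lemma early_zero:
  assumes w0: "\<forall>j<length r. w (r!j) \<ge> 0"
  shows "\<forall>j<length r. t \<le> j \<longrightarrow> queues r w mu lam t j = 0"
proof (induction t)
  case 0 then show ?case by simp
next
  case (Suc t)
  show ?case
  proof (intro allI impI)
    fix j assume j: "j < length r" "Suc t \<le> j"
    have q: "queues r w mu lam t j = 0" using Suc j by simp
    have q': "queues r w mu lam t (j-1) = 0" using Suc j by simp
    show "queues r w mu lam (Suc t) j = 0" using q q' j w0 by (auto simp: serv_def)
  qed
qed

lemma delivered_early:
  assumes w0: "\<forall>j<length r. w (r!j) \<ge> 0" and n: "r \<noteq> []" and d: "d < length r"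
  shows "delivered r w mu lam (Suc d) = 0"
  unfolding delivered_def
proof (rule sum.neutral, intro ballI)
  fix u assume "u \<in> {..<Suc d}"
  then have "u \<le> length r - 1" using d by auto
  then have "queues r w mu lam u (length r - 1) = 0" using early_zero[OF w0] n by simp
  then show "serv r w mu u (queues r w mu lam u) (length r - 1) = 0" using w0 n by (simp add: serv_def)
qed

lemma sum_set_nth: "distinct r \<Longrightarrow> (\<Sum>e\<in>set r. f e) = (\<Sum>i<length r. f (r!i))"
proof -
  assume "distinct r"
  then have "(\<Sum>e\<in>set r. f e) = sum_list (map f r)" by (simp add: sum_list_distinct_conv_sum_set)
  also have "\<dots> = (\<Sum>i<length r. f (r!i))" by (simp add: sum_list_sum_nth atLeast0LessThan)
  finally show ?thesis .
qed

theorem theorem5: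
  fixes E :: "('v \<times> 'v) set" and M :: "('v \<times> 'v) set set"
    and c :: "('v \<times> 'v) \<Rightarrow> real"
    and r :: "('v \<times> 'v) list" and w :: "('v \<times> 'v) \<Rightarrow> real"
    and mu :: "nat \<Rightarrow> ('v \<times> 'v) set" and K :: nat and lam :: real
  assumes "is_route E r"
    and "\<forall>A\<in>M. A \<subseteq> E"
    and "admissible M mu"
    and "cyclic mu K"
    and "\<forall>e\<in>set r. \<exists>t. e \<in> mu t"
    and "lam > 0"
    and "\<forall>e\<in>set r. w e \<le> c e"
    and "\<forall>e\<in>set r. w e \<ge> lam * real (inter_sched mu e)"
  shows "enat (length r) \<le> max_delay r w mu lam
       \<and> max_delay r w mu lam \<le> enat (\<Sum>e\<in>set r. inter_sched mu e)"
proof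
  have ne: "r \<noteq> []" and dist: "distinct r" using assms(1) by (auto simp: is_route_def)
  have lam: "lam > 0" using assms(6) .
  have w0: "\<forall>j<length r. w (r!j) \<ge> 0" using assms(8) lam
    by (meson mult_nonneg_nonneg less_imp_le nth_mem of_nat_0_le_iff order_trans)
  let ?n = "length r"
  let ?S = "\<Sum>e\<in>set r. inter_sched mu e"
  have Seq: "real ?S = (\<Sum>i<Suc (?n - 1). real (inter_sched mu (r!i)))"
    using sum_set_nth[OF dist, of "\<lambda>e. real (inter_sched mu e)"] ne by simp
  have delDD: "delivered r w mu lam t = DD r w mu lam (?n - 1) t" for t
    by (simp add: delivered_def DD_def)
  have bound: "delivered r w mu lam t \<ge> lam * (real t - real ?S)" for t
    using all_hops[OF assms(4,5,6,8), of "?n - 1" t] ne Seq delDD by simp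
  show "enat ?n \<le> max_delay r w mu lam"
  proof -
    have as: "arrival_slot lam lam = 0" using lam by (simp add: arrival_slot_def)
    have "enat ?n \<le> particle_delay r w mu lam lam"
    proof (cases "\<exists>d. lam \<le> delivered r w mu lam (Suc d)")
      case True
      have "?n \<le> (LEAST d. lam \<le> delivered r w mu lam (Suc d))"
      proof (rule LeastI2_ex[OF True])
        fix d assume d: "lam \<le> delivered r w mu lam (Suc d)"
        show "?n \<le> d"
        proof (rule ccontr)
          assume "\<not> ?n \<le> d"
          then have "delivered r w mu lam (Suc d) = 0" using delivered_early[OF w0 ne] by simp
          then show False using d lam by simp
        qed
      qed
      then show ?thesis using True as by (simp add: particle_delay_def)
    next
      case False
      then show ?thesis by (simp add: particle_delay_def)
    qed
    also have "\<dots> \<le> max_delay r w mu lam" unfolding max_delay_def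
      by (rule SUP_upper) (use lam in auto)
    finally show ?thesis .
  qed
  show "max_delay r w mu lam \<le> enat ?S"
    unfolding max_delay_def
  proof (rule SUP_least)
    fix x :: real assume "x \<in> {0<..}"
    then have x: "x > 0" by simp
    define a where "a = arrival_slot lam x"
    have xl: "x / lam > 0" using x lam by simp
    then have c1: "\<lceil>x / lam\<rceil> \<ge> 1" by (simp add: one_le_ceiling zero_less_ceiling)
    have "real a = of_int (\<lceil>x / lam\<rceil> - 1)" using c1 by (simp add: a_def arrival_slot_def)
    then have "x / lam \<le> real a + 1" by simp
    then have xa: "x \<le> lam * (real a + 1)" using lam by (simp add: divide_le_eq mult.commute)
    have del: "x \<le> delivered r w mu lam (Suc (a + ?S))"
    proof -
      have "lam * (real (Suc (a + ?S)) - real ?S) = lam * (real a + 1)" by simp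
      then show ?thesis using bound[of "Suc (a + ?S)"] xa by linarith
    qed
    then have ex: "\<exists>d. x \<le> delivered r w mu lam (Suc d)" by blast
    have "(LEAST d. x \<le> delivered r w mu lam (Suc d)) \<le> a + ?S" by (rule Least_le) (rule del)
    then show "particle_delay r w mu lam x \<le> enat ?S"
      using ex by (simp add: particle_delay_def a_def[symmetric])
  qed
qed

end
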